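(* Let $c$ and $n$ be odd positive integers with $n>c>\frac{n}{2}$. There is a bijection between the set of hit-huggers in $S_n$ whose last letter is $n$ and the set of standard Young tableaux of rectangular shape with $2$ rows and $n-c-1$ columns, such that the parity of the Latin reading word of each tableau equals the parity of its corresponding hit-hugger.
   Context: Permutations are written in one-line notation. The order permutation (standardization) of a word $u$ of distinct positive integers of length $\ell$ is the unique $\pi\in S_\ell$ with $\pi_i<\pi_j$ iff $u_i<u_j$. A hit in a permutation is a contiguous subword of length $c$ whose order permutation is a cyclic shift of $12\cdots c$; a hit starts at the position of its first letter. A hit-hugger in $S_n$ is a permutation with exactly two hits, one starting at position $1$ and one starting at position $n-c+1$. Young tableaux are standard, in English notation, with entries $1,\ldots,2(n-c-1)$; the Latin reading word of a tableau is obtained by reading its entries row by row from top to bottom, each row left to right, and its parity is its sign as a permutation of $\{1,\ldots,2(n-c-1)\}$. *)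

theory Defs
  imports "HOL-Combinatorics.Permutations"
begin

text \<open>Permutations of S_n in one-line notation are lists of length n that
are arrangements of {1..n}. Positions are 1-based in the paper, 0-based for
list indexing.\<close>

definition is_perm_list :: "nat \<Rightarrow> nat list \<Rightarrow> bool" where
  "is_perm_list n p \<longleftrightarrow> length p = n \<and> distinct p \<and> set p = {1..n}"

definition std :: "nat list \<Rightarrow> nat list" where
  "std u = map (\<lambda>x. card {y \<in> set u. y \<le> x}) u"

definition cyc_shifts :: "nat \<Rightarrow> nat list set" where
  "cyc_shifts c = {rotate k [1..<c+1] | k. k < c}"

text \<open>A hit of length c starts at (1-based) position i.\<close>
definition hit_at :: "nat \<Rightarrow> nat list \<Rightarrow> nat \<Rightarrow> bool" where
  "hit_at c p i \<longleftrightarrow> 1 \<le> i \<and> i + c \<le> length p + 1 \<and>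
      std (take c (drop (i - 1) p)) \<in> cyc_shifts c"

definition hit_starts :: "nat \<Rightarrow> nat list \<Rightarrow> nat set" where
  "hit_starts c p = {i. hit_at c p i}"

definition hit_hugger :: "nat \<Rightarrow> nat \<Rightarrow> nat list \<Rightarrow> bool" where
  "hit_hugger n c p \<longleftrightarrow> is_perm_list n p \<and> hit_starts c p = {1, n - c + 1}"

definition perm_of_list :: "nat list \<Rightarrow> nat \<Rightarrow> nat" where
  "perm_of_list w = (\<lambda>i. if 1 \<le> i \<and> i \<le> length w then w ! (i - 1) else i)"

text \<open>Standard Young tableaux (English notation) as lists of rows.\<close>
definition syt :: "nat list \<Rightarrow> nat list list \<Rightarrow> bool" where
  "syt shape T \<longleftrightarrow> map length T = shape \<and>
     distinct (concat T) \<and> set (concat T) = {1..sum_list shape} \<and>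
     (\<forall>r \<in> set T. sorted_wrt (<) r) \<and>
     (\<forall>i j. i + 1 < length T \<and> j < length (T ! (i + 1)) \<longrightarrow> T ! i ! j < T ! (i + 1) ! j)"

definition latin_reading_word :: "nat list list \<Rightarrow> nat list" where
  "latin_reading_word T = concat T"

end

theory Submission
  imports Defs "HOL-Combinatorics.Cycles"
begin


lemma std_nth: "i < length w \<Longrightarrow> std w ! i = card {y \<in> set w. y \<le> w ! i}"
  by (simp add: std_def)

lemma std_less:
  assumes "i < length w" "l < length w" "w ! i < w ! l"
  shows "std w ! i < std w ! l"
proof -
  have a: "w ! l \<in> {y \<in> set w. y \<le> w ! l}" "w ! l \<notin> {y \<in> set w. y \<le> w ! i}"
    using assms nth_mem[OF assms(2)] by simp_all
  have "{y \<in> set w. y \<le> w ! i} \<subseteq> {y \<in> set w. y \<le> w ! l}"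
    using assms by auto
  then have "{y \<in> set w. y \<le> w ! i} \<subset> {y \<in> set w. y \<le> w ! l}"
    using a by blast
  then show ?thesis using assms by (simp add: std_nth psubset_card_mono)
qed

lemma std_refl:
  assumes "i < length w" "l < length w" "std w ! i < std w ! l"
  shows "w ! i < w ! l"
proof (rule ccontr)
  assume "\<not> w ! i < w ! l"
  then have "{y \<in> set w. y \<le> w ! l} \<subseteq> {y \<in> set w. y \<le> w ! i}" by auto
  then have "card {y \<in> set w. y \<le> w ! l} \<le> card {y \<in> set w. y \<le> w ! i}"
    by (intro card_mono) auto
  then show False using assms by (simp add: std_nth)
qed

lemma length_std[simp]: "length (std w) = length w"
  by (simp add: std_def)

lemma sorted_le_set:
  fixes X :: "nat list"
  assumes "sorted_wrt (<) X" "i < length X"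
  shows "{z \<in> set X. z \<le> X ! i} = set (take (Suc i) X)"
proof (intro set_eqI iffI)
  fix z assume "z \<in> {z \<in> set X. z \<le> X ! i}"
  then obtain l where l: "l < length X" "z = X ! l" "X ! l \<le> X ! i" by (auto simp: in_set_conv_nth)
  have "l \<le> i"
  proof (rule ccontr)
    assume "\<not> l \<le> i" then have "X ! i < X ! l" using sorted_wrt_nth_less[OF assms(1)] l by simp
    from leD[OF l(3)] this show False by contradiction
  qed
  then show "z \<in> set (take (Suc i) X)" using l by (auto simp: in_set_conv_nth intro!: exI[of _ l])
next
  fix z assume "z \<in> set (take (Suc i) X)"
  then obtain l where l: "l < Suc i" "z = X ! l" using assms(2) by (auto simp: in_set_conv_nth)
  have "X ! l \<le> X ! i"
    using sorted_wrt_nth_less[OF assms(1)] l assms(2) by (cases "l = i") (auto simp: order.strict_implies_order)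
  then show "z \<in> {z \<in> set X. z \<le> X ! i}" using l assms(2) by auto
qed

lemma std_two_runs:
  assumes X: "sorted_wrt (<) X" and Y: "sorted_wrt (<) Y"
    and XY: "\<forall>a\<in>set X. \<forall>b\<in>set Y. b < a"
  shows "std (X @ Y) = [length Y + 1..<length X + length Y + 1] @ [1..<length Y + 1]"
proof (rule nth_equalityI)
  show "length (std (X @ Y)) = length ([length Y + 1..<length X + length Y + 1] @ [1..<length Y + 1])"
    unfolding std_def length_map length_append length_upt by simp
  fix i assume i: "i < length (std (X @ Y))"
  have dX: "distinct X" using X by (simp add: strict_sorted_iff)
  have dY: "distinct Y" using Y by (simp add: strict_sorted_iff)
  show "std (X @ Y) ! i = ([length Y + 1..<length X + length Y + 1] @ [1..<length Y + 1]) ! i"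
  proof (cases "i < length X")
    case True
    have xi: "(X @ Y) ! i = X ! i" using True by (simp add: nth_append)
    have "{y \<in> set (X @ Y). y \<le> X ! i} = set Y \<union> {z \<in> set X. z \<le> X ! i}"
    proof -
      have "\<forall>b\<in>set Y. b \<le> X ! i" using XY nth_mem[OF True] by (meson order.strict_implies_order)
      then show ?thesis by auto
    qed
    also have "\<dots> = set Y \<union> set (take (Suc i) X)" using sorted_le_set[OF X True] by simp
    finally have e: "{y \<in> set (X @ Y). y \<le> X ! i} = set Y \<union> set (take (Suc i) X)" .
    have disj: "set Y \<inter> set (take (Suc i) X) = {}" using XY
      by (auto dest: in_set_takeD)
    have ct: "card (set (take (Suc i) X)) = Suc i"
      using dX True by (simp add: distinct_card)
    have "card (set Y \<union> set (take (Suc i) X)) = length Y + Suc i"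
      using disj dY ct by (simp add: card_Un_disjoint distinct_card)
    then have "std (X @ Y) ! i = length Y + Suc i" using i e xi by (simp add: std_nth)
    moreover have "([length Y + 1..<length X + length Y + 1] @ [1..<length Y + 1]) ! i = length Y + 1 + i"
      using True by (simp add: nth_append del: upt_Suc)
    ultimately show ?thesis by simp
  next
    case False
    define j where "j = i - length X"
    have j: "j < length Y" using i False by (simp add: std_def j_def)
    have yi: "(X @ Y) ! i = Y ! j" using False by (simp add: nth_append j_def)
    have "{y \<in> set (X @ Y). y \<le> Y ! j} = {z \<in> set Y. z \<le> Y ! j}"
    proof -
      have "\<forall>a\<in>set X. \<not> a \<le> Y ! j" using XY nth_mem[OF j] by (meson leD)
      then show ?thesis by auto
    qed
    also have "\<dots> = set (take (Suc j) Y)" using sorted_le_set[OF Y j] by simp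
    also have "card \<dots> = Suc j" using dY j by (simp add: distinct_card)
    finally have "std (X @ Y) ! i = Suc j" using i yi by (simp add: std_nth)
    moreover have "([length Y + 1..<length X + length Y + 1] @ [1..<length Y + 1]) ! i = Suc j"
      using False j by (simp add: nth_append j_def del: upt_Suc)
    ultimately show ?thesis by simp
  qed
qed


declare upt_Suc[simp del]

lemma std_two_runs_cyc:
  assumes X: "sorted_wrt (<) X" and Y: "sorted_wrt (<) Y"
    and XY: "\<forall>a\<in>set X. \<forall>b\<in>set Y. b < a" and c: "length (X @ Y) = c" and c0: "0 < c"
  shows "std (X @ Y) \<in> cyc_shifts c"
proof (cases "X = []")
  case True
  have "std (X @ Y) = rotate 0 [1..<c+1]" using std_two_runs[OF X Y XY] True c by simp
  then show ?thesis using c0 unfolding cyc_shifts_def by (intro CollectI exI[of _ 0]) (simp del: upt_Suc)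
next
  case False
  have lt: "length Y < c" using False c by (cases X) auto
  have "rotate (length Y) [1..<c+1] = drop (length Y) [1..<c+1] @ take (length Y) [1..<c+1]"
    using lt by (simp add: rotate_drop_take)
  also have "\<dots> = [length Y + 1..<length X + length Y + 1] @ [1..<length Y + 1]"
    using lt c by simp
  finally have "std (X @ Y) = rotate (length Y) [1..<c+1]" using std_two_runs[OF X Y XY] by simp
  then show ?thesis using lt unfolding cyc_shifts_def by blast
qed

lemma rot_val:
  assumes "i < c"
  shows "rotate j [1..<c+1] ! i = (j + i) mod c + 1"
proof -
  have "rotate j [1..<c+1] ! i = [1..<c+1] ! ((j + i) mod c)"
    using assms by (simp add: nth_rotate)
  also have "\<dots> = (j + i) mod c + 1" using assms
    by (subst nth_upt) (auto intro: mod_less_divisor order.strict_trans2)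
  finally show ?thesis .
qed


lemma sign_cycle:
  "distinct cs \<Longrightarrow> sign (cycle_of_list cs) = (-1) ^ (length cs - 1)"
proof (induction cs rule: cycle_of_list.induct)
  case (1 i j cs)
  have "sign (cycle_of_list (i # j # cs)) = sign (transpose i j) * sign (cycle_of_list (j # cs))"
    by (simp add: sign_compose permutation_swap_id permutation_of_cycle)
  also have "\<dots> = - ((-1) ^ (length (j # cs) - 1))"
    using 1 by (simp add: sign_swap_id)
  also have "\<dots> = (-1) ^ (length (i # j # cs) - 1)" by simp
  finally show ?case .
qed auto

lemma sign_funpow:
  "permutation f \<Longrightarrow> sign (f ^^ k) = sign f ^ k"
  by (induction k) (simp_all add: sign_compose permutation_funpow)

lemma perm_of_list_permutes:
  assumes "is_perm_list N w"
  shows "perm_of_list w permutes {1..N}"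
proof (rule bij_imp_permutes)
  have len: "length w = N" and d: "distinct w" and st: "set w = {1..N}"
    using assms by (auto simp: is_perm_list_def)
  have img: "perm_of_list w ` {1..N} = {1..N}"
  proof -
    have "perm_of_list w ` {1..N} = (\<lambda>i. w ! (i - 1)) ` {1..N}"
      using len by (auto simp: perm_of_list_def)
    also have "\<dots> = (\<lambda>i. w ! i) ` {0..<N}"
    proof (intro set_eqI iffI)
      fix x assume "x \<in> (\<lambda>i. w ! (i - 1)) ` {1..N}"
      then obtain i where "i \<in> {1..N}" "x = w ! (i - 1)" by auto
      then show "x \<in> (\<lambda>i. w ! i) ` {0..<N}" by (intro image_eqI[of _ _ "i - 1"]) auto
    next
      fix x assume "x \<in> (\<lambda>i. w ! i) ` {0..<N}"
      then obtain i where "i < N" "x = w ! i" by auto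
      then show "x \<in> (\<lambda>i. w ! (i - 1)) ` {1..N}" by (intro image_eqI[of _ _ "i + 1"]) auto
    qed
    also have "\<dots> = set w" using len by (auto simp: set_conv_nth)
    finally show ?thesis using st by simp
  qed
  have inj: "inj_on (perm_of_list w) {1..N}"
  proof (rule inj_onI)
    fix x y assume "x \<in> {1..N}" "y \<in> {1..N}" "perm_of_list w x = perm_of_list w y"
    then have "w ! (x - 1) = w ! (y - 1)" "x - 1 < length w" "y - 1 < length w"
      using len by (auto simp: perm_of_list_def)
    then have "x - 1 = y - 1" using d by (simp add: nth_eq_iff_index_eq)
    then show "x = y" using \<open>x \<in> {1..N}\<close> \<open>y \<in> {1..N}\<close> by auto
  qed
  show "bij_betw (perm_of_list w) {1..N} {1..N}" using inj img by (simp add: bij_betw_def)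
  show "\<And>x. x \<notin> {1..N} \<Longrightarrow> perm_of_list w x = x"
    using len by (auto simp: perm_of_list_def)
qed

lemma cyc_pow_val:
  assumes "i < c"
  shows "(cycle_of_list [1..<c+1] ^^ k) (i + 1) = (k + i) mod c + 1"
proof -
  have "map (cycle_of_list [1..<c+1] ^^ k) [1..<c+1] = rotate k [1..<c+1]"
    by (rule cyclic_rotation) simp
  then have "(cycle_of_list [1..<c+1] ^^ k) ([1..<c+1] ! i) = rotate k [1..<c+1] ! i"
    by (metis assms length_map length_upt nth_map diff_add_inverse2)
  then show ?thesis using assms rot_val[OF assms, of k] by simp
qed

lemma cyc_pow_out:
  assumes "x \<notin> {1..c}"
  shows "(cycle_of_list [1..<c+1] ^^ k) x = x"
proof -
  have "cycle_of_list [1..<c+1] permutes {1..c}"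
    using cycle_permutes[of "[1..<c+1]"] by (simp add: atLeastLessThanSuc_atLeastAtMost)
  then have "(cycle_of_list [1..<c+1] ^^ k) permutes {1..c}" by (rule permutes_funpow)
  then show ?thesis using assms by (simp add: permutes_not_in)
qed

lemma perm_rot:
  assumes A: "length A = m" and B: "length B = k"
  shows "perm_of_list (A @ B @ R) = perm_of_list (B @ A @ R) \<circ> (cycle_of_list [1..<m+k+1] ^^ k)"
proof
  fix x
  let ?z = "cycle_of_list [1..<m+k+1] ^^ k"
  show "perm_of_list (A @ B @ R) x = (perm_of_list (B @ A @ R) \<circ> ?z) x"
  proof (cases "x \<in> {1..m+k}")
    case True
    then obtain i where i: "x = i + 1" "i < m + k" by (intro that[of "x - 1"]) auto
    have z: "?z x = (k + i) mod (m + k) + 1" using cyc_pow_val[OF i(2)] i by simp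
    show ?thesis
    proof (cases "i < m")
      case True
      have "(k + i) mod (m + k) = k + i" using True by simp
      then show ?thesis using z i True A B by (simp add: perm_of_list_def nth_append)
    next
      case False
      have "(k + i) mod (m + k) = i - m" using False i(2)
        by (simp add: mod_if)
      moreover have "i - m < k" using False i(2) by simp
      ultimately show ?thesis using z i False A B by (simp add: perm_of_list_def nth_append)
    qed
  next
    case False
    have z: "?z x = x" using cyc_pow_out[OF False] by simp
    show ?thesis using False z A B by (auto simp: perm_of_list_def nth_append add.commute)
  qed
qed


lemma perm_shift:
  assumes w: "is_perm_list L w"
  shows "perm_of_list ([1..<s+1] @ map (\<lambda>v. v + s) w @ [s + L + 1])
         = map_permutation {1..L} (\<lambda>v. v + s) (perm_of_list w)"
proof
  fix x
  have len: "length w = L" using w by (simp add: is_perm_list_def)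
  have img: "(\<lambda>v. v + s) ` {1..L} = {s+1..s+L}"
  proof (intro set_eqI iffI)
    fix y assume "y \<in> {s+1..s+L}" then show "y \<in> (\<lambda>v. v + s) ` {1..L}"
      by (intro image_eqI[of _ _ "y - s"]) auto
  qed auto
  have inj: "inj_on (\<lambda>v. v + s) {1..L}" by (auto simp: inj_on_def)
  show "perm_of_list ([1..<s+1] @ map (\<lambda>v. v + s) w @ [s + L + 1]) x
         = map_permutation {1..L} (\<lambda>v. v + s) (perm_of_list w) x"
  proof (cases "x \<in> {s+1..s+L}")
    case True
    have inv: "inv_into {1..L} (\<lambda>v. v + s) x = x - s"
      using True by (intro inv_into_f_eq[OF inj]) auto
    have b: "1 \<le> x - s" "x - s \<le> L" using True by auto
    have r: "map_permutation {1..L} (\<lambda>v. v + s) (perm_of_list w) x = w ! (x - s - 1) + s"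
      using True inv len b unfolding map_permutation_def restrict_id_def img
      by (simp add: perm_of_list_def)
    have "x - 1 \<ge> s" "x - 1 - s < L" using True by auto
    then have "([1..<s+1] @ map (\<lambda>v. v + s) w @ [s + L + 1]) ! (x - 1) = w ! (x - s - 1) + s"
      using len by (simp add: nth_append)
    then show ?thesis using r True len by (simp add: perm_of_list_def)
  next
    case False
    have r: "map_permutation {1..L} (\<lambda>v. v + s) (perm_of_list w) x = x"
      using False unfolding map_permutation_def restrict_id_def img by auto
    consider "x = 0" | "1 \<le> x" "x \<le> s" | "x = s + L + 1" | "x > s + L + 1"
      using False by fastforce
    then show ?thesis
    proof cases
      case 2
      then have "x - 1 < length [1..<s+1]" by simp
      then have "([1..<s+1] @ map (\<lambda>v. v + s) w @ [s + L + 1]) ! (x - 1) = [1..<s+1] ! (x - 1)"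
        by (simp only: nth_append if_True)
      also have "\<dots> = x" using 2 by simp
      finally have "([1..<s+1] @ map (\<lambda>v. v + s) w @ [s + L + 1]) ! (x - 1) = x" .
      then show ?thesis using 2 r len by (simp add: perm_of_list_def)
    next
      case 3
      then have "([1..<s+1] @ map (\<lambda>v. v + s) w @ [s + L + 1]) ! (x - 1) = x"
        using len by (simp add: nth_append)
      then show ?thesis using 3 r len by (simp add: perm_of_list_def)
    qed (use r len in \<open>auto simp: perm_of_list_def\<close>)
  qed
qed

lemma sign_shift:
  assumes w: "is_perm_list L w"
  shows "sign (perm_of_list ([1..<s+1] @ map (\<lambda>v. v + s) w @ [s + L + 1])) = sign (perm_of_list w)"
  unfolding perm_shift[OF w]
  by (rule sign_map_permutation[OF _ perm_of_list_permutes[OF w]]) (auto simp: inj_on_def)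

lemma sign_main:
  assumes p: "is_perm_list n (A @ B @ R)" and A: "length A = m" and B: "length B = k"
    and c: "c = m + k" and oc: "odd c"
  shows "sign (perm_of_list (A @ B @ R)) = sign (perm_of_list (B @ A @ R))"
proof -
  have pu: "is_perm_list n (B @ A @ R)" using p by (auto simp: is_perm_list_def)
  have "sign (cycle_of_list [1..<m+k+1]) = (-1) ^ (m + k - 1)"
    by (subst sign_cycle) auto
  also have "\<dots> = 1" using oc c by (simp add: neg_one_even_power)
  finally have s1: "sign (cycle_of_list [1..<m+k+1]) = 1" .
  have z: "sign (cycle_of_list [1..<m+k+1] ^^ k) = 1"
    using sign_funpow[OF permutation_of_cycle[of "[1..<m+k+1]"], of k] s1 by simp
  show ?thesis
    unfolding perm_rot[OF A B, of R]
    by (subst sign_compose)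
       (auto simp: z[simplified] permutation_funpow permutation_of_cycle
             intro: permutes_imp_permutation[OF _ perm_of_list_permutes[OF pu]])
qed


definition gT :: "nat \<Rightarrow> nat \<Rightarrow> nat list list \<Rightarrow> nat list" where
  "gT k n T = ((k+1) # map (\<lambda>v. v + (k+1)) (T!0)) @ [1..<k+1] @ (map (\<lambda>v. v + (k+1)) (T!1) @ [n])"

lemma modc:
  fixes i j c :: nat
  assumes "i < c" "j < c"
  shows "(j + i) mod c = (if j + i < c then j + i else j + i - c)"
proof (cases "j + i < c")
  case False
  then have "(j + i) mod c = (j + i - c) mod c" using le_mod_geq[of c "j + i"] by simp
  also have "\<dots> = j + i - c" using assms by simp
  finally show ?thesis using False by simp
qed simp

lemma syt_unpack:
  assumes "syt [L, L] T"
  shows "T = [T!0, T!1]" "length (T!0) = L" "length (T!1) = L"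
    "distinct (T!0 @ T!1)" "set (T!0 @ T!1) = {1..2*L}"
    "sorted_wrt (<) (T!0)" "sorted_wrt (<) (T!1)"
    "\<And>j. j < L \<Longrightarrow> T!0!j < T!1!j"
proof -
  have ml: "map length T = [L, L]" using assms by (simp add: syt_def)
  have lT: "length T = 2" using arg_cong[OF ml, of length] by simp
  then show T: "T = [T!0, T!1]"
    by (cases T; cases "tl T"; auto)
  show "length (T!0) = L" "length (T!1) = L" using ml lT by (auto dest: arg_cong[where f="\<lambda>l. l!0"] arg_cong[where f="\<lambda>l. l!1"])
  have cT: "concat T = T!0 @ T!1" using T by (metis concat.simps append_Nil2)
  show "distinct (T!0 @ T!1)" "set (T!0 @ T!1) = {1..2*L}"
    using assms cT by (simp_all add: syt_def mult_2)
  have "\<forall>r\<in>set T. sorted_wrt (<) r" using assms by (simp add: syt_def)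
  then show "sorted_wrt (<) (T!0)" "sorted_wrt (<) (T!1)" using lT by auto
  fix j assume "j < L"
  then show "T!0!j < T!1!j" using assms \<open>length (T!1) = L\<close> lT unfolding syt_def
    by (metis One_nat_def Suc_1 add_0 lessI)
qed

locale hs =
  fixes n c m k L :: nat
  assumes oc: "odd c" and on: "odd n" and c0: "0 < c" and cn: "c < n" and n2: "n < 2 * c"
    and m_def: "m = n - c" and k_def: "k = c - m" and L_def: "L = m - 1"
begin

lemma basic: "even m" "2 \<le> m" "odd k" "1 \<le> k" "c = m + k" "n = 2 * m + k" "m = L + 1" "1 \<le> L"
proof -
  show em: "even m" using oc on cn m_def by auto
  have "0 < m" using cn m_def by simp
  then show m2: "2 \<le> m" using em by presburger
  show "c = m + k" "n = 2 * m + k" using m_def k_def cn n2 by auto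
  then show "odd k" using oc em by auto
  then show "1 \<le> k" by (cases k) auto
  show "m = L + 1" "1 \<le> L" using L_def m2 by auto
qed

end


declare upt_Suc[simp del]

context hs
begin

lemma gT_props:
  assumes T: "syt [L, L] T"
  shows "is_perm_list n (gT k n T)" "last (gT k n T) = n" "hit_hugger n c (gT k n T)"
proof -
  note bs = basic
  define x where "x = T!0"
  define y where "y = T!1"
  define s where "s = k + 1"
  define Ax where "Ax = s # map (\<lambda>v. v + s) x"
  define B where "B = [1..<k+1]"
  define Ry where "Ry = map (\<lambda>v. v + s) y @ [n]"
  have p: "gT k n T = Ax @ B @ Ry" by (simp add: gT_def Ax_def B_def Ry_def x_def y_def s_def)
  note U = syt_unpack[OF T]
  have lx: "length x = L" and ly: "length y = L" using U by (auto simp: x_def y_def)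
  have dxy: "distinct (x @ y)" and sxy: "set (x @ y) = {1..2*L}" using U by (auto simp: x_def y_def)
  have sx: "sorted_wrt (<) x" and sy: "sorted_wrt (<) y" using U by (auto simp: x_def y_def)
  have col: "\<And>j. j < L \<Longrightarrow> x!j < y!j" using U by (auto simp: x_def y_def)
  have hx: "\<And>v. v \<in> set x \<Longrightarrow> 1 \<le> v \<and> v \<le> 2*L" using sxy by auto
  have hy: "\<And>v. v \<in> set y \<Longrightarrow> 1 \<le> v \<and> v \<le> 2*L" using sxy by auto
  have ns: "n = s + 2*L + 1" using bs by (simp add: s_def)
  have lA: "length Ax = m" and lB: "length B = k" and lR: "length Ry = m"
    using lx ly bs by (simp_all add: Ax_def B_def Ry_def)
  have lp: "length (Ax @ B @ Ry) = n" using lA lB lR bs by simp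
  have Aval: "\<And>a. a \<in> set Ax \<Longrightarrow> s \<le> a \<and> a < n" using hx ns by (fastforce simp: Ax_def)
  have Bval: "\<And>b. b \<in> set B \<Longrightarrow> 1 \<le> b \<and> b < s" by (auto simp: B_def s_def)
  have Rval: "\<And>r. r \<in> set Ry \<Longrightarrow> s < r \<and> r \<le> n" using hy ns by (fastforce simp: Ry_def)
  have dp: "distinct (Ax @ B @ Ry)"
  proof -
    have d1: "distinct Ax" using dxy hx by (fastforce simp: Ax_def distinct_map inj_on_def)
    have d2: "distinct Ry" using dxy hy ns by (fastforce simp: Ry_def distinct_map inj_on_def)
    have d3: "set Ax \<inter> set B = {}" using Aval Bval by fastforce
    have d4: "set B \<inter> set Ry = {}" using Rval Bval by fastforce
    have d5: "set Ax \<inter> set Ry = {}"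
    proof -
      have "s \<notin> set Ry" using Rval by blast
      moreover have "n \<notin> set Ax" using Aval by blast
      moreover have "set x \<inter> set y = {}" using dxy by simp
      ultimately show ?thesis by (auto simp: Ax_def Ry_def)
    qed
    show ?thesis using d1 d2 d3 d4 d5 by (auto simp: B_def)
  qed
  have sp: "set (Ax @ B @ Ry) \<subseteq> {1..n}"
  proof
    fix v assume "v \<in> set (Ax @ B @ Ry)"
    then consider "v \<in> set Ax" | "v \<in> set B" | "v \<in> set Ry" by auto
    then show "v \<in> {1..n}"
    proof cases
      case 1 then show ?thesis using Aval[of v] by (simp add: s_def)
    next
      case 2 then show ?thesis using Bval[of v] ns by simp
    next
      case 3 then show ?thesis using Rval[of v] by simp
    qed
  qed
  have sp2: "set (Ax @ B @ Ry) = {1..n}"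
  proof (rule card_subset_eq[OF _ sp])
    have "card (set (Ax @ B @ Ry)) = length (Ax @ B @ Ry)" by (rule distinct_card[OF dp])
    then show "card (set (Ax @ B @ Ry)) = card {1..n}" using lp by simp
  qed simp
  show ip: "is_perm_list n (gT k n T)" using p dp lp sp2 by (simp add: is_perm_list_def)
  show "last (gT k n T) = n" using p by (simp add: Ry_def)
  have sA: "sorted_wrt (<) Ax" using sx hx by (fastforce simp: Ax_def sorted_wrt_map)
  have sB: "sorted_wrt (<) B" by (simp add: B_def)
  have sR: "sorted_wrt (<) Ry" using sy hy ns by (fastforce simp: Ry_def sorted_wrt_append sorted_wrt_map)
  have hit1: "hit_at c (Ax @ B @ Ry) 1"
  proof -
    have "take c (drop (1 - 1) (Ax @ B @ Ry)) = Ax @ B" using lA lB bs by simp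
    moreover have "std (Ax @ B) \<in> cyc_shifts c"
      by (rule std_two_runs_cyc) (use sA sB Aval Bval lA lB bs c0 in fastforce)+
    ultimately show ?thesis using lp bs unfolding hit_at_def by simp
  qed
  have hit2: "hit_at c (Ax @ B @ Ry) (m + 1)"
  proof -
    have e1: "drop (m + 1 - 1) (Ax @ B @ Ry) = B @ Ry" using lA by simp
    have e2: "take c (B @ Ry) = (B @ Ry) @ []" using lB lR bs by simp
    have "std ((B @ Ry) @ []) \<in> cyc_shifts c"
      by (rule std_two_runs_cyc) (use sB sR Bval Rval lR lB bs c0 in \<open>fastforce simp: sorted_wrt_append\<close>)+
    then show ?thesis using lp bs unfolding hit_at_def e1 e2 by simp
  qed
  have nohit: "\<not> hit_at c (Ax @ B @ Ry) i" if i: "2 \<le> i" "i \<le> m" for i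
  proof
    assume h: "hit_at c (Ax @ B @ Ry) i"
    define t where "t = i - 1"
    define P where "P = Ax @ B @ Ry"
    have lP: "length P = n" using lp by (simp add: P_def)
    define w where "w = take c (drop t P)"
    have t: "1 \<le> t" "t \<le> L" using i bs by (auto simp: t_def)
    have lw: "length w = c" using t lP bs by (simp add: w_def)
    have wn: "\<And>l. l < c \<Longrightarrow> w ! l = (Ax @ B @ Ry) ! (t + l)"
      using t lP bs by (simp add: w_def P_def[symmetric])
    obtain j where j: "j < c" "std w = rotate j [1..<c+1]"
      using h by (auto simp: hit_at_def cyc_shifts_def w_def t_def P_def)
    have sv: "\<And>l. l < c \<Longrightarrow> std w ! l = (j + l) mod c + 1" using j rot_val by simp
    have "(Ax @ B @ Ry) ! t = x ! (t - 1) + s"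
      using t lA lx by (cases t) (auto simp: nth_append Ax_def)
    moreover have "(Ax @ B @ Ry) ! (t + (c - 1)) = y ! (t - 1) + s"
    proof -
      have q: "t + (c - 1) = length Ax + (length B + (t - 1))" using lA lB bs t by simp
      have "t - 1 < length y" using t ly by simp
      then have "Ry ! (t - 1) = y ! (t - 1) + s" by (simp add: Ry_def nth_append_left)
      then show ?thesis by (simp only: q nth_append_length_plus)
    qed
    ultimately have "w ! 0 < w ! (c - 1)" using wn[of 0] wn[of "c - 1"] c0 col[of "t - 1"] t by simp
    then have f1: "(j + 0) mod c < (j + (c - 1)) mod c"
      using std_less[of 0 w "c - 1"] sv[of 0] sv[of "c - 1"] lw c0 by simp
    have "(Ax @ B @ Ry) ! (t + (m - t)) = 1" using lA lB bs t by (simp add: nth_append B_def)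
    moreover have "(Ax @ B @ Ry) ! (t + (m - 1 - t)) \<ge> s"
    proof -
      have "t + (m - 1 - t) < length Ax" using lA bs t by simp
      then have "(Ax @ B @ Ry) ! (t + (m - 1 - t)) = Ax ! (t + (m - 1 - t))" by (simp add: nth_append)
      then show ?thesis using Aval nth_mem \<open>t + (m - 1 - t) < length Ax\<close> by metis
    qed
    ultimately have "w ! (m - t) < w ! (m - 1 - t)" using wn[of "m - t"] wn[of "m - 1 - t"] bs t
      by (simp add: s_def)
    then have f2: "(j + (m - t)) mod c < (j + (m - 1 - t)) mod c"
      using std_less[of "m - t" w "m - 1 - t"] sv[of "m - t"] sv[of "m - 1 - t"] lw bs t by simp
    have a1: "m - t < c" "m - 1 - t < c" "c - 1 < c" "0 < c" using bs t by auto
    show False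
      using f1 f2 modc[OF a1(1) j(1)] modc[OF a1(2) j(1)] modc[OF a1(3) j(1)] modc[OF a1(4) j(1)] t bs j(1)
      by (auto split: if_splits)
  qed
  have "hit_starts c (Ax @ B @ Ry) = {1, m + 1}"
  proof (intro set_eqI iffI)
    fix i assume "i \<in> hit_starts c (Ax @ B @ Ry)"
    then have h: "hit_at c (Ax @ B @ Ry) i" by (simp add: hit_starts_def)
    then have "1 \<le> i" "i \<le> m + 1" using lp bs by (auto simp: hit_at_def)
    then show "i \<in> {1, m + 1}" using nohit[of i] h by fastforce
  next
    fix i assume "i \<in> {1, m + 1}"
    then show "i \<in> hit_starts c (Ax @ B @ Ry)" using hit1 hit2 by (auto simp: hit_starts_def)
  qed
  then show "hit_hugger n c (gT k n T)" using ip p m_def by (simp add: hit_hugger_def)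
qed

end


declare upt_Suc[simp del]

lemma hit_order:
  assumes h: "hit_at c p (t + 1)" and c0: "0 < c"
  shows "\<exists>j<c. \<forall>l l'. l < c \<longrightarrow> l' < c \<longrightarrow> (j + l) mod c < (j + l') mod c \<longrightarrow> p ! (t + l) < p ! (t + l')"
proof -
  define w where "w = take c (drop t p)"
  have tc: "t + c \<le> length p" using h by (simp add: hit_at_def)
  have lw: "length w = c" using tc by (simp add: w_def)
  have wn: "\<And>l. l < c \<Longrightarrow> w ! l = p ! (t + l)" using tc by (simp add: w_def)
  obtain j where j: "j < c" "std w = rotate j [1..<c+1]"
    using h by (auto simp: hit_at_def cyc_shifts_def w_def)
  show ?thesis
  proof (intro exI[of _ j] conjI allI impI)
    fix l l' assume l: "l < c" "l' < c" "(j + l) mod c < (j + l') mod c"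
    have "std w ! l < std w ! l'" using l j rot_val[of l c j] rot_val[of l' c j] by simp
    then have "w ! l < w ! l'" using std_refl lw l by simp
    then show "p ! (t + l) < p ! (t + l')" using wn l by simp
  qed (rule j(1))
qed

lemma tworun_window_hit:
  assumes d: "d \<le> c" and tc: "t + c \<le> length p" and c0: "0 < c"
    and a: "\<And>l l'. l < l' \<Longrightarrow> l' < d \<Longrightarrow> p ! (t + l) < p ! (t + l')"
    and b: "\<And>l l'. d \<le> l \<Longrightarrow> l < l' \<Longrightarrow> l' < c \<Longrightarrow> p ! (t + l) < p ! (t + l')"
    and cc: "\<And>l l'. l < d \<Longrightarrow> d \<le> l' \<Longrightarrow> l' < c \<Longrightarrow> p ! (t + l') < p ! (t + l)"
  shows "hit_at c p (t + 1)"
proof -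
  define w where "w = take c (drop t p)"
  have lw: "length w = c" using tc by (simp add: w_def)
  have wn: "\<And>l. l < c \<Longrightarrow> w ! l = p ! (t + l)" using tc by (simp add: w_def)
  have e: "w = take d w @ drop d w" by simp
  have sX: "sorted_wrt (<) (take d w)"
    unfolding sorted_wrt_iff_nth_less using lw d wn a by auto
  have sY: "sorted_wrt (<) (drop d w)"
    unfolding sorted_wrt_iff_nth_less using lw d wn b by auto
  have XY: "\<forall>x\<in>set (take d w). \<forall>y\<in>set (drop d w). y < x"
  proof (intro ballI)
    fix x y assume "x \<in> set (take d w)" "y \<in> set (drop d w)"
    then obtain l l' where l: "l < d" "x = w ! l" "l' < c - d" "y = w ! (d + l')"
      using lw d by (auto simp: in_set_conv_nth)
    then show "y < x" using cc[of l "d + l'"] wn[of l] wn[of "d + l'"] d by simp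
  qed
  have "std (take d w @ drop d w) \<in> cyc_shifts c"
    by (rule std_two_runs_cyc[OF sX sY XY]) (use lw c0 in simp_all)
  then have "std w \<in> cyc_shifts c" by (simp only: append_take_drop_id)
  then show ?thesis using tc unfolding hit_at_def w_def by simp
qed


declare upt_Suc[simp del]

context hs
begin

lemma hh_order:
  assumes hh: "hit_hugger n c p" and lst: "last p = n"
  shows "\<And>i l. i < l \<Longrightarrow> l < m \<Longrightarrow> p ! i < p ! l"
    and "\<And>i l. m \<le> i \<Longrightarrow> i < l \<Longrightarrow> l < n \<Longrightarrow> p ! i < p ! l"
    and "\<And>i l. i < m \<Longrightarrow> m \<le> l \<Longrightarrow> l < c \<Longrightarrow> p ! l < p ! i"
    and "\<And>t. 1 \<le> t \<Longrightarrow> t < m \<Longrightarrow> p ! t < p ! (c + t - 1)"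
proof -
  note bs = basic
  have lp: "length p = n" and dp: "distinct p" and sp: "set p = {1..n}"
    using hh by (auto simp: hit_hugger_def is_perm_list_def)
  have hsx: "\<And>i. hit_at c p i \<longleftrightarrow> i = 1 \<or> i = m + 1"
  proof -
    fix i
    have "hit_starts c p = {1, m + 1}" using hh m_def cn by (simp add: hit_hugger_def)
    then show "hit_at c p i \<longleftrightarrow> i = 1 \<or> i = m + 1" by (auto simp: hit_starts_def)
  qed
  have pv: "\<And>i. i < n \<Longrightarrow> p ! i \<le> n" using sp lp nth_mem by fastforce
  have "p \<noteq> []" using lp cn by auto
  then have plast: "p ! (n - 1) = n" using lst lp by (simp add: last_conv_nth)
  have W1: "\<And>i l. m \<le> i \<Longrightarrow> i < l \<Longrightarrow> l < n \<Longrightarrow> p ! i < p ! l"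
  proof -
    obtain j where j: "j < c" and jo: "\<And>l l'. l < c \<Longrightarrow> l' < c \<Longrightarrow> (j + l) mod c < (j + l') mod c \<Longrightarrow> p ! (m + l) < p ! (m + l')"
      using hit_order[of c p m] hsx[of "m + 1"] c0 by blast
    have j0: "j = 0"
    proof (rule ccontr)
      assume "j \<noteq> 0"
      then have a: "(j + (c - 1)) mod c < (j + (c - 1 - j)) mod c"
        using j modc[of "c - 1" c j] modc[of "c - 1 - j" c j] by auto
      have lt: "p ! (m + (c - 1)) < p ! (m + (c - 1 - j))" using jo[OF _ _ a] j by simp
      have e: "m + (c - 1) = n - 1" using bs by simp
      have le: "p ! (m + (c - 1 - j)) \<le> n" using pv bs j by simp
      from lt[unfolded e] le plast show False by simp
    qed
    fix i l assume il: "m \<le> i" "i < l" "l < n"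
    have "p ! (m + (i - m)) < p ! (m + (l - m))"
      using jo[of "i - m" "l - m"] il bs j0 by simp
    then show "p ! i < p ! l" using il by simp
  qed
  show "\<And>i l. m \<le> i \<Longrightarrow> i < l \<Longrightarrow> l < n \<Longrightarrow> p ! i < p ! l" by (rule W1)
  obtain j where j: "j < c" and jo: "\<And>l l'. l < c \<Longrightarrow> l' < c \<Longrightarrow> (j + l) mod c < (j + l') mod c \<Longrightarrow> p ! (0 + l) < p ! (0 + l')"
    using hit_order[of c p 0] hsx[of 1] c0 by auto
  define d where "d = c - j"
  have d: "1 \<le> d" "d \<le> c" using j by (auto simp: d_def)
  have Fa: "\<And>l l'. l < l' \<Longrightarrow> l' < d \<Longrightarrow> p ! l < p ! l'"
  proof -
    fix l l' assume l: "l < l'" "l' < d"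
    have "(j + l) mod c = j + l" "(j + l') mod c = j + l'" using l d_def j by auto
    then show "p ! l < p ! l'" using jo[of l l'] l d by simp
  qed
  have Fb: "\<And>l l'. d \<le> l \<Longrightarrow> l < l' \<Longrightarrow> l' < c \<Longrightarrow> p ! l < p ! l'"
  proof -
    fix l l' assume l: "d \<le> l" "l < l'" "l' < c"
    have "(j + l) mod c = j + l - c" "(j + l') mod c = j + l' - c"
      using l d_def j modc[of l c j] modc[of l' c j] by auto
    then show "p ! l < p ! l'" using jo[of l l'] l d d_def by simp
  qed
  have Fc: "\<And>l l'. l < d \<Longrightarrow> d \<le> l' \<Longrightarrow> l' < c \<Longrightarrow> p ! l' < p ! l"
  proof -
    fix l l' assume l: "l < d" "d \<le> l'" "l' < c"
    have "(j + l) mod c = j + l" "(j + l') mod c = j + l' - c"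
      using l d_def j modc[of l c j] modc[of l' c j] by auto
    then show "p ! l' < p ! l" using jo[of l' l] l d d_def by simp
  qed
  have dm: "d = m"
  proof (rule ccontr)
    assume "d \<noteq> m"
    then consider "d < m" | "m < d" by linarith
    then show False
    proof cases
      case 1
      have inc: "\<And>a b. d \<le> a \<Longrightarrow> a < b \<Longrightarrow> b < n \<Longrightarrow> p ! a < p ! b"
      proof -
        fix a b assume ab: "d \<le> a" "a < b" "b < n"
        show "p ! a < p ! b"
        proof (cases "b < c")
          case True then show ?thesis using Fb ab by simp
        next
          case False
          show ?thesis
          proof (cases "m \<le> a")
            case True then show ?thesis using W1 ab by simp
          next
            case False
            have "p ! a < p ! m" using Fb[of a m] ab False bs by simp
            also have "p ! m < p ! b" using W1[of m b] ab \<open>\<not> b < c\<close> bs by simp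
            finally show ?thesis .
          qed
        qed
      qed
      have "hit_at c p (d + 1)"
        by (rule tworun_window_hit[of c c d p]) (use inc lp 1 bs c0 in auto)
      then show False using hsx[of "d + 1"] 1 d by simp
    next
      case 2
      have inc: "\<And>a b. a < b \<Longrightarrow> b < n \<Longrightarrow> p ! a < p ! b"
      proof -
        fix a b assume ab: "a < b" "b < n"
        show "p ! a < p ! b"
        proof (cases "b < d")
          case True then show ?thesis using Fa ab by simp
        next
          case False
          show ?thesis
          proof (cases "m \<le> a")
            case True then show ?thesis using W1 ab by simp
          next
            case False
            have "p ! a < p ! m" using Fa[of a m] ab False 2 by simp
            also have "p ! m < p ! b" using W1[of m b] ab \<open>\<not> b < d\<close> 2 by simp
            finally show ?thesis .
          qed
        qed
      qed
      have "hit_at c p (1 + 1)"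
        by (rule tworun_window_hit[of c c 1 p]) (use inc lp bs c0 in auto)
      then show False using hsx[of "1 + 1"] bs by simp
    qed
  qed
  show P1: "\<And>i l. i < l \<Longrightarrow> l < m \<Longrightarrow> p ! i < p ! l" using Fa dm by simp
  show P3: "\<And>i l. i < m \<Longrightarrow> m \<le> l \<Longrightarrow> l < c \<Longrightarrow> p ! l < p ! i" using Fc dm by simp
  show "\<And>t. 1 \<le> t \<Longrightarrow> t < m \<Longrightarrow> p ! t < p ! (c + t - 1)"
  proof (rule ccontr)
    fix t assume t: "1 \<le> t" "t < m" and nt: "\<not> p ! t < p ! (c + t - 1)"
    have "c + t - 1 \<noteq> t" "c + t - 1 < n" using t bs by auto
    then have "p ! t \<noteq> p ! (c + t - 1)" using dp lp t bs by (simp add: nth_eq_iff_index_eq)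
    then have lt: "p ! (c + t - 1) < p ! t" using nt by simp
    have "hit_at c p (t + 1)"
    proof (rule tworun_window_hit[of "m - t" c t p])
      show "m - t \<le> c" "t + c \<le> length p" "0 < c" using t bs lp by auto
      show "\<And>l l'. l < l' \<Longrightarrow> l' < m - t \<Longrightarrow> p ! (t + l) < p ! (t + l')"
        using P1 by simp
      show "\<And>l l'. m - t \<le> l \<Longrightarrow> l < l' \<Longrightarrow> l' < c \<Longrightarrow> p ! (t + l) < p ! (t + l')"
        using W1 t bs by simp
      show "\<And>l l'. l < m - t \<Longrightarrow> m - t \<le> l' \<Longrightarrow> l' < c \<Longrightarrow> p ! (t + l') < p ! (t + l)"
      proof -
        fix l l' assume l: "l < m - t" "m - t \<le> l'" "l' < c"
        show "p ! (t + l') < p ! (t + l)"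
        proof (cases "t + l' < c")
          case True then show ?thesis using P3[of "t + l" "t + l'"] l t by simp
        next
          case False
          have "p ! (t + l') \<le> p ! (c + t - 1)"
            using W1[of "t + l'" "c + t - 1"] l t bs False by (cases "t + l' = c + t - 1") (auto simp: add.commute)
          also have "\<dots> < p ! t" by (rule lt)
          also have "p ! t \<le> p ! (t + l)"
          proof -
            have tl: "t + l < m" using l(1) by linarith
            show ?thesis using P1[of t "t + l"] tl by (cases "l = 0") auto
          qed
          finally show ?thesis .
        qed
      qed
    qed
    then show False using hsx[of "t + 1"] t by simp
  qed
qed

end


declare upt_Suc[simp del]

context hs
begin

lemma hh_struct:
  assumes hh: "hit_hugger n c p" and lst: "last p = n"
  shows "\<exists>T. syt [L, L] T \<and> p = gT k n T"
proof -
  note bs = basic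
  note P1 = hh_order(1)[OF hh lst] and W1 = hh_order(2)[OF hh lst]
    and P3 = hh_order(3)[OF hh lst] and P4 = hh_order(4)[OF hh lst]
  have lp: "length p = n" and dp: "distinct p" and sp: "set p = {1..n}"
    using hh by (auto simp: hit_hugger_def is_perm_list_def)
  have pv: "\<And>i. i < n \<Longrightarrow> 1 \<le> p ! i \<and> p ! i \<le> n" using sp lp nth_mem by fastforce
  have "p \<noteq> []" using lp cn by auto
  then have plast: "p ! (n - 1) = n" using lst lp by (simp add: last_conv_nth)
  have pinj: "\<And>i l. i < n \<Longrightarrow> l < n \<Longrightarrow> p ! i = p ! l \<Longrightarrow> i = l"
    using dp lp by (simp add: nth_eq_iff_index_eq)
  define s where "s = k + 1"
  have Bvals: "\<And>l. m \<le> l \<Longrightarrow> l < c \<Longrightarrow> p ! l \<le> k"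
  proof -
    fix l assume l: "m \<le> l" "l < c"
    define v where "v = p ! l"
    have ln: "l < n" using l cn by simp
    have sub: "{1..<v} \<subseteq> (\<lambda>i. p ! i) ` ({m..<c} - {l})"
    proof
      fix u assume u: "u \<in> {1..<v}"
      then have "u \<in> set p" using sp pv[OF ln] by (auto simp: v_def)
      then obtain i where i: "i < n" "p ! i = u" using lp by (auto simp: in_set_conv_nth)
      have "i \<noteq> l" using i u by (auto simp: v_def)
      moreover have "\<not> i < m" using P3[of i l] l i u by (auto simp: v_def)
      moreover have "\<not> c \<le> i" using W1[of l i] l i u by (auto simp: v_def)
      ultimately show "u \<in> (\<lambda>i. p ! i) ` ({m..<c} - {l})" using i by force
    qed
    have "v - 1 = card {1..<v}" by simp
    also have "\<dots> \<le> card ((\<lambda>i. p ! i) ` ({m..<c} - {l}))" by (rule card_mono[OF _ sub]) simp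
    also have "\<dots> \<le> card ({m..<c} - {l})" by (rule card_image_le) simp
    also have "\<dots> = k - 1" using l bs by simp
    finally have "v - 1 \<le> k - 1" .
    moreover have "1 \<le> v" using pv[OF ln] by (simp add: v_def)
    ultimately show "p ! l \<le> k" using bs by (simp add: v_def)
  qed
  define B where "B = take k (drop m p)"
  have lB: "length B = k" using lp bs by (simp add: B_def)
  have Bn0: "\<And>i. i < k \<Longrightarrow> B ! i = p ! (m + i)" using lp bs by (simp add: B_def)
  have Bl: "B = [1..<k+1]"
  proof (rule sorted_distinct_set_unique)
    show "distinct B" using dp by (simp add: B_def)
    have sw: "sorted_wrt (<) B"
      unfolding sorted_wrt_iff_nth_less using lB Bn0 W1 bs by simp
    then show "sorted B" by (simp add: strict_sorted_iff)
    show "sorted [1..<k+1]" "distinct [1..<k+1]" by simp_all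
    have ss: "set B \<subseteq> {1..k}"
    proof
      fix b assume "b \<in> set B"
      then obtain i where i: "i < k" "b = B ! i" using lB by (auto simp: in_set_conv_nth)
      then show "b \<in> {1..k}" using Bn0 Bvals[of "m + i"] pv[of "m + i"] bs by simp
    qed
    have "set B = {1..k}"
      by (rule card_subset_eq[OF _ ss]) (use distinct_card[OF \<open>distinct B\<close>] lB in simp_all)
    then show "set B = set [1..<k+1]" by (simp add: atLeastLessThanSuc_atLeastAtMost)
  qed
  have Bn: "\<And>i. i < k \<Longrightarrow> p ! (m + i) = i + 1"
  proof -
    fix i assume i: "i < k"
    have "p ! (m + i) = B ! i" using Bn0[OF i] by simp
    also have "\<dots> = [1..<k+1] ! i" by (simp only: Bl)
    also have "\<dots> = 1 + i" using i by (intro nth_upt) simp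
    finally show "p ! (m + i) = i + 1" by simp
  qed
  have p0: "p ! 0 = s"
  proof -
    have "p ! (c - 1) = k" using Bn[of "k - 1"] bs by simp
    moreover have "p ! (c - 1) < p ! 0" using P3[of 0 "c - 1"] bs by simp
    ultimately have ge: "s \<le> p ! 0" by (simp add: s_def)
    have "s \<in> set p" using sp bs by (simp add: s_def)
    then obtain q where q: "q < n" "p ! q = s" using lp by (auto simp: in_set_conv_nth)
    have "\<not> (m \<le> q \<and> q < c)" using Bvals[of q] q by (auto simp: s_def)
    then consider "q = 0" | "0 < q" "q < m" | "c \<le> q" by linarith
    then have "p ! 0 \<le> p ! q"
    proof cases
      case 1 then show ?thesis by simp
    next
      case 2 then show ?thesis using P1[of 0 q] by simp
    next
      case 3
      have "p ! 0 < p ! 1" using P1[of 0 1] bs by simp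
      also have "\<dots> < p ! c" using P4[of 1] bs by simp
      also have "p ! c \<le> p ! q" using W1[of c q] 3 q bs by (cases "c = q") auto
      finally show ?thesis by simp
    qed
    then show ?thesis using ge q by simp
  qed
  define U where "U = drop 1 (take m p)"
  define V where "V = take L (drop c p)"
  have lU: "length U = L" using lp bs by (simp add: U_def)
  have lV: "length V = L" using lp bs by (simp add: V_def)
  have Un: "\<And>j. j < L \<Longrightarrow> U ! j = p ! (Suc j)" using lp bs by (simp add: U_def)
  have Vn: "\<And>j. j < L \<Longrightarrow> V ! j = p ! (c + j)" using lp bs by (simp add: V_def)
  have lt_n: "\<And>i. i < n - 1 \<Longrightarrow> p ! i < n"
  proof -
    fix i assume i: "i < n - 1"
    have "p ! i \<noteq> p ! (n - 1)" using pinj[of i "n - 1"] i by auto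
    then show "p ! i < n" using pv[of i] plast i by fastforce
  qed
  have Uv: "\<And>j. j < L \<Longrightarrow> s < U ! j \<and> U ! j < n"
  proof -
    fix j assume j: "j < L"
    have "p ! 0 < p ! (Suc j)" using P1[of 0 "Suc j"] j bs by simp
    moreover have "p ! (Suc j) < n" using lt_n[of "Suc j"] j bs by simp
    ultimately show "s < U ! j \<and> U ! j < n" using Un j p0 by simp
  qed
  have Vv: "\<And>j. j < L \<Longrightarrow> s < V ! j \<and> V ! j < n"
  proof -
    fix j assume j: "j < L"
    have "p ! 0 < p ! 1" using P1[of 0 1] bs by simp
    also have "\<dots> < p ! c" using P4[of 1] bs by simp
    also have "p ! c \<le> p ! (c + j)" using W1[of c "c + j"] j bs by (cases j) auto
    finally have "s < p ! (c + j)" using p0 by simp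
    moreover have "p ! (c + j) < n" using lt_n[of "c + j"] j bs by simp
    ultimately show "s < V ! j \<and> V ! j < n" using Vn j by simp
  qed
  have d1: "take m p = s # U"
  proof -
    have "take m p ! 0 # drop (Suc 0) (take m p) = drop 0 (take m p)"
      by (rule Cons_nth_drop_Suc) (use lp bs in simp)
    then show ?thesis using p0 bs by (simp add: U_def)
  qed
  have d2: "drop c p = V @ [n]"
  proof -
    have "drop c p = take L (drop c p) @ drop L (drop c p)" by (rule append_take_drop_id[symmetric])
    also have "drop L (drop c p) = drop (n - 1) p"
    proof -
      have e: "L + c = n - 1" using bs by simp
      show ?thesis by (simp only: drop_drop e)
    qed
    also have "\<dots> = [n]"
    proof -
      have "p ! (n - 1) # drop (Suc (n - 1)) p = drop (n - 1) p"
        by (rule Cons_nth_drop_Suc) (use lp cn in simp)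
      moreover have "drop (Suc (n - 1)) p = []" using lp cn by simp
      ultimately show ?thesis using plast by simp
    qed
    finally show ?thesis by (simp add: V_def)
  qed
  have dec: "p = (s # U) @ [1..<k+1] @ (V @ [n])"
  proof -
    have "p = take m p @ drop m p" by simp
    also have "drop m p = B @ drop c p" unfolding B_def using bs
      by (metis add.commute append_take_drop_id drop_drop)
    finally show ?thesis using d1 d2 Bl by simp
  qed
  define f where "f = (\<lambda>v::nat. v - s)"
  define T where "T = [map f U, map f V]"
  have vU: "\<And>v. v \<in> set U \<Longrightarrow> s < v \<and> v < n" using Uv lU by (auto simp: in_set_conv_nth)
  have vV: "\<And>v. v \<in> set V \<Longrightarrow> s < v \<and> v < n" using Vv lV by (auto simp: in_set_conv_nth)
  have dUV: "distinct (U @ V)" using dp dec by (simp del: distinct_append) (simp add: distinct_append, blast)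
  have vUV: "\<And>v. v \<in> set (U @ V) \<Longrightarrow> s < v" using vU vV by auto
  have injf: "inj_on f (set (U @ V))"
  proof (rule inj_onI)
    fix x y assume "x \<in> set (U @ V)" "y \<in> set (U @ V)" "f x = f y"
    then show "x = y" using vUV[of x] vUV[of y] by (simp add: f_def)
  qed
  have cT: "concat T = map f (U @ V)" by (simp add: T_def)
  have dT: "distinct (concat T)" unfolding cT distinct_map using dUV injf by blast
  have ns: "n = s + 2 * L + 1" using bs by (simp add: s_def)
  have sT: "set (concat T) = {1..sum_list [L, L]}"
  proof (rule card_subset_eq)
    show "set (concat T) \<subseteq> {1..sum_list [L, L]}"
      using vU vV ns by (fastforce simp: T_def f_def)
    have "card (set (concat T)) = length (concat T)" by (rule distinct_card[OF dT])
    then show "card (set (concat T)) = card {1..sum_list [L, L]}" using lU lV by (simp add: T_def)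
  qed simp
  have sU: "sorted_wrt (<) (map f U)"
    unfolding sorted_wrt_iff_nth_less
  proof (intro allI impI)
    fix i j assume ij: "i < j" "j < length (map f U)"
    then have "p ! (Suc i) < p ! (Suc j)" using P1[of "Suc i" "Suc j"] lU bs by simp
    then show "map f U ! i < map f U ! j" using Un[of i] Un[of j] Uv[of i] Uv[of j] ij lU
      by (simp add: f_def)
  qed
  have sV: "sorted_wrt (<) (map f V)"
    unfolding sorted_wrt_iff_nth_less
  proof (intro allI impI)
    fix i j assume ij: "i < j" "j < length (map f V)"
    then have "p ! (c + i) < p ! (c + j)" using W1[of "c + i" "c + j"] lV bs by simp
    then show "map f V ! i < map f V ! j" using Vn[of i] Vn[of j] Vv[of i] Vv[of j] ij lV
      by (simp add: f_def)
  qed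
  have colT: "\<And>j. j < L \<Longrightarrow> map f U ! j < map f V ! j"
  proof -
    fix j assume j: "j < L"
    have "p ! (Suc j) < p ! (c + Suc j - 1)" using P4[of "Suc j"] j bs by simp
    then show "map f U ! j < map f V ! j" using Un[of j] Vn[of j] Uv[of j] Vv[of j] j lU lV by (simp add: f_def)
  qed
  have syt: "syt [L, L] T"
    unfolding syt_def
  proof (intro conjI allI impI)
    show "map length T = [L, L]" using lU lV by (simp add: T_def)
    show "distinct (concat T)" by (rule dT)
    show "set (concat T) = {1..sum_list [L, L]}" by (rule sT)
    show "\<forall>r\<in>set T. sorted_wrt (<) r" using sU sV by (simp add: T_def)
    fix i j assume "i + 1 < length T \<and> j < length (T ! (i + 1))"
    then have "i = 0" "j < L" using lV by (auto simp: T_def)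
    then show "T ! i ! j < T ! (i + 1) ! j" using colT by (simp add: T_def)
  qed
  have "gT k n T = p"
  proof -
    have "map (\<lambda>v. v + (k + 1)) (map f U) = U" unfolding map_map
    proof (rule map_idI)
      fix v assume "v \<in> set U" then show "((\<lambda>v. v + (k + 1)) \<circ> f) v = v"
        using vU[of v] by (simp add: f_def s_def)
    qed
    moreover have "map (\<lambda>v. v + (k + 1)) (map f V) = V" unfolding map_map
    proof (rule map_idI)
      fix v assume "v \<in> set V" then show "((\<lambda>v. v + (k + 1)) \<circ> f) v = v"
        using vV[of v] by (simp add: f_def s_def)
    qed
    ultimately show ?thesis using dec by (simp add: gT_def T_def s_def)
  qed
  then show ?thesis using syt by blast
qed

end


declare upt_Suc[simp del]

context hs
begin

lemma gT_inj: "inj_on (gT k n) {T. syt [L, L] T}"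
proof (rule inj_onI)
  fix T T' assume T: "T \<in> {T. syt [L, L] T}" and T': "T' \<in> {T. syt [L, L] T}"
    and e: "gT k n T = gT k n T'"
  note U = syt_unpack[of L T] and U' = syt_unpack[of L T']
  have sT: "syt [L, L] T" and sT': "syt [L, L] T'" using T T' by auto
  have injf: "inj (\<lambda>v::nat. v + (k + 1))" by (simp add: inj_on_def)
  have l1: "length ((k + 1) # map (\<lambda>v. v + (k + 1)) (T ! 0)) = length ((k + 1) # map (\<lambda>v. v + (k + 1)) (T' ! 0))"
    using U(2)[OF sT] U'(2)[OF sT'] by simp
  from e have "((k + 1) # map (\<lambda>v. v + (k + 1)) (T ! 0)) @ ([1..<k+1] @ (map (\<lambda>v. v + (k + 1)) (T ! 1) @ [n]))
     = ((k + 1) # map (\<lambda>v. v + (k + 1)) (T' ! 0)) @ ([1..<k+1] @ (map (\<lambda>v. v + (k + 1)) (T' ! 1) @ [n]))"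
    by (simp only: gT_def)
  then have c: "(k + 1) # map (\<lambda>v. v + (k + 1)) (T ! 0) = (k + 1) # map (\<lambda>v. v + (k + 1)) (T' ! 0)
     \<and> [1..<k+1] @ (map (\<lambda>v. v + (k + 1)) (T ! 1) @ [n]) = [1..<k+1] @ (map (\<lambda>v. v + (k + 1)) (T' ! 1) @ [n])"
    by (subst (asm) append_eq_append_conv[OF disjI1[OF l1]])
  then have "map (\<lambda>v. v + (k + 1)) (T ! 0) = map (\<lambda>v. v + (k + 1)) (T' ! 0)"
    and "map (\<lambda>v. v + (k + 1)) (T ! 1) = map (\<lambda>v. v + (k + 1)) (T' ! 1)"
    by simp_all
  then have "T ! 0 = T' ! 0" "T ! 1 = T' ! 1" using injf by simp_all
  then show "T = T'" using U(1)[OF sT] U'(1)[OF sT'] by metis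
qed

lemma gT_sign:
  assumes T: "syt [L, L] T"
  shows "sign (perm_of_list (concat T)) = sign (perm_of_list (gT k n T))"
proof -
  note bs = basic
  note U = syt_unpack[OF T]
  define x where "x = T!0"
  define y where "y = T!1"
  define s where "s = k + 1"
  define A where "A = s # map (\<lambda>v. v + s) x"
  define B where "B = [1..<k+1]"
  define R where "R = map (\<lambda>v. v + s) y @ [n]"
  have p: "gT k n T = A @ B @ R" by (simp add: gT_def A_def B_def R_def x_def y_def s_def)
  have lA: "length A = m" and lB: "length B = k" using U bs by (simp_all add: A_def B_def x_def)
  have ip: "is_perm_list n (A @ B @ R)" using gT_props(1)[OF T] p by simp
  have "sign (perm_of_list (A @ B @ R)) = sign (perm_of_list (B @ A @ R))"
    by (rule sign_main[OF ip lA lB _ oc]) (use bs in simp)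
  moreover have "B @ A @ R = [1..<s+1] @ map (\<lambda>v. v + s) (x @ y) @ [s + 2 * L + 1]"
  proof -
    have "[1..<s+1] = B @ [s]" by (simp add: B_def s_def upt_Suc_append)
    then show ?thesis using bs by (simp add: A_def R_def s_def)
  qed
  moreover have "is_perm_list (2 * L) (x @ y)"
    using U by (simp add: is_perm_list_def x_def y_def)
  moreover have "concat T = x @ y" using U(1) by (metis x_def y_def concat.simps append_Nil2)
  ultimately show ?thesis using p sign_shift[of "2 * L" "x @ y" s] by simp
qed

end

theorem lemma2p16:
  fixes n c :: nat
  assumes "odd c" and "odd n" and "0 < c" and "c < n" and "n < 2 * c"
  shows "\<exists>f. bij_betw f {p. hit_hugger n c p \<and> last p = n}
                         {T. syt [n - c - 1, n - c - 1] T} \<and>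
             (\<forall>p. hit_hugger n c p \<and> last p = n \<longrightarrow>
                 sign (perm_of_list (latin_reading_word (f p))) = sign (perm_of_list p))"
proof -
  interpret hs n c "n - c" "c - (n - c)" "n - c - 1"
    by unfold_locales (use assms in auto)
  define G where "G = gT (c - (n - c)) n"
  define S where "S = {T. syt [n - c - 1, n - c - 1] T}"
  define H where "H = {p. hit_hugger n c p \<and> last p = n}"
  have img: "G ` S = H"
  proof (intro set_eqI iffI)
    fix p assume "p \<in> G ` S"
    then obtain T where "T \<in> S" "p = G T" by auto
    then show "p \<in> H" using gT_props[of T] by (simp add: S_def H_def G_def)
  next
    fix p assume "p \<in> H"
    then obtain T where "syt [n - c - 1, n - c - 1] T" "p = G T"
      using hh_struct[of p] by (auto simp: H_def G_def)
    then show "p \<in> G ` S" by (auto simp: S_def)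
  qed
  have bij: "bij_betw G S H" using gT_inj img by (simp add: bij_betw_def G_def S_def)
  define f where "f = inv_into S G"
  have bf: "bij_betw f H S" using bij_betw_inv_into[OF bij] by (simp add: f_def)
  have sg: "sign (perm_of_list (latin_reading_word (f p))) = sign (perm_of_list p)" if "p \<in> H" for p
  proof -
    have fS: "f p \<in> S" using bf that by (rule bij_betw_apply)
    have "G (f p) = p" using that img by (simp add: f_def f_inv_into_f)
    then show ?thesis using gT_sign[of "f p"] fS by (simp add: S_def G_def latin_reading_word_def)
  qed
  show ?thesis using bf sg unfolding H_def S_def by blast
qed


end
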